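(* Let $n\geq 3$ and let $C_n^*$ be the bigraded complex described in the context. Let $\phi\colon C_n^*\to C_n^*$ be an $R$-linear chain map that is homogeneous of bigrading $(c_1,c_2)$ with $c_1>-2n$ and $c_2>-2n$, and suppose that the image of $\phi(\alpha_n^* )$ is a boundary in the complex $C_n^*\otimes_R \mathbb{F}[\mathcal{U}]/(\mathcal{U}^{n-1})$, where $\mathcal{V}$ acts on $\mathbb{F}[\mathcal{U}]/(\mathcal{U}^{n-1})$ as $1$. Then $\phi(\alpha_n^* )$ is divisible by $\mathcal{U}^{n-1}$.
   Context: Let $\mathbb{F}=\mathbb{Z}/2$ and $R=\mathbb{F}[\mathcal{U},\mathcal{V}]$, bigraded by $(\operatorname{gr}_{\mathcal{U}},\operatorname{gr}_{\mathcal{V}})$ with $\mathcal{U}$ of bigrading $(-2,0)$ and $\mathcal{V}$ of bigrading $(0,-2)$. For $n\geq 3$, $C_n^*$ is the free $R$-module with basis $\alpha^*_s$ ($1\leq s\leq 2n-1$); $\widetilde{\alpha}^*_s$ ($1\leq s\leq n-2$ and $n+1\leq s\leq 2n-2$); $b^{*,(s)}_{n-1}$ ($1\leq s\leq n-2$); $b^{*,(s)}_{n}$ ($1\leq s\leq 2n-2$); $b^{*,(s)}_{n+1}$ ($n+1\leq s\leq 2n-2$), with $R$-linear differential $\partial$ given by $\partial\alpha^*_s=0$, $\partial\widetilde{\alpha}^*_s=0$, and $\partial b^{*,(s)}_{n-1}=\mathcal{U}^{n(n-1)/2}\mathcal{V}^{n(n-1)/2}\alpha^*_s+\mathcal{V}^{n-s-1}\widetilde{\alpha}^*_s$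 for $1\leq s\leq n-2$; $\partial b^{*,(s)}_{n}=\mathcal{U}^{n(n+1)/2-s}\mathcal{V}^{n(n+1)/2}\alpha^*_{s+1}+\mathcal{U}^{n}\widetilde{\alpha}^*_s$ for $1\leq s\leq n-2$; $\partial b^{*,(s)}_{n}=\mathcal{U}^{n(n+1)/2}\mathcal{V}^{n(n-1)/2-n+s+1}\alpha^*_s+\mathcal{U}^{n(n+1)/2-s}\mathcal{V}^{n(n+1)/2}\alpha^*_{s+1}$ for $n-1\leq s\leq n$; $\partial b^{*,(s)}_{n}=\mathcal{U}^{n(n+1)/2}\mathcal{V}^{n(n-1)/2-n+s+1}\alpha^*_s+\mathcal{V}^{n}\widetilde{\alpha}^*_s$ for $n+1\leq s\leq 2n-2$; $\partial b^{*,(s)}_{n+1}=\mathcal{U}^{n(n-1)/2}\mathcal{V}^{n(n-1)/2}\alpha^*_{s+1}+\mathcal{U}^{s-n}\widetilde{\alpha}^*_s$ for $n+1\leq s\leq 2n-2$. The basis elements are assigned bigradings so that $\partial$ is homogeneous of bigrading $(-1,-1)$ (unique up to an overall shift; any such choice is fixed). A map is homogeneous of bigrading $(c_1,c_2)$ if it sends homogeneous elements of bigrading $(a,b)$ to homogeneous elements of bigrading $(a+c_1,b+c_2)$. *)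

theory Defs
  imports Main
begin

text \<open>Generators of C_n^*: A s = alpha_s, At s = tilde alpha_s,
  B1 s = b_{n-1}^{(s)}, B0 s = b_n^{(s)}, B2 s = b_{n+1}^{(s)}.\<close>
datatype gen = A nat | At nat | B1 nat | B0 nat | B2 nat

fun valid_gen :: "nat \<Rightarrow> gen \<Rightarrow> bool" where
  "valid_gen n (A s) = (1 \<le> s \<and> s \<le> 2*n - 1)"
| "valid_gen n (At s) = ((1 \<le> s \<and> s \<le> n - 2) \<or> (n + 1 \<le> s \<and> s \<le> 2*n - 2))"
| "valid_gen n (B1 s) = (1 \<le> s \<and> s \<le> n - 2)"
| "valid_gen n (B0 s) = (1 \<le> s \<and> s \<le> 2*n - 2)"
| "valid_gen n (B2 s) = (n + 1 \<le> s \<and> s \<le> 2*n - 2)"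

text \<open>An element of C_n^* (a free R-module, R = F_2[U,V]) is an F_2-linear
  combination of monomials U^i V^j g, encoded as the finite set of triples (g,i,j)
  with coefficient 1.\<close>
type_synonym elem = "(gen \<times> nat \<times> nat) set"

definition Cn :: "nat \<Rightarrow> elem set" where
  "Cn n = {x. finite x \<and> (\<forall>(g,i,j)\<in>x. valid_gen n g)}"

definition add :: "elem \<Rightarrow> elem \<Rightarrow> elem" where
  "add x y = (x - y) \<union> (y - x)"

definition mulU :: "nat \<Rightarrow> elem \<Rightarrow> elem" where
  "mulU k x = (\<lambda>(g,i,j). (g, i + k, j)) ` x"

definition mulV :: "nat \<Rightarrow> elem \<Rightarrow> elem" where
  "mulV k x = (\<lambda>(g,i,j). (g, i, j + k)) ` x"

text \<open>Differential on generators: set of monomials (g', a, b) meaning U^a V^b g'.\<close>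
fun dgen :: "nat \<Rightarrow> gen \<Rightarrow> (gen \<times> nat \<times> nat) set" where
  "dgen n (A s) = {}"
| "dgen n (At s) = {}"
| "dgen n (B1 s) =
     (if 1 \<le> s \<and> s \<le> n - 2
      then {(A s, n*(n-1) div 2, n*(n-1) div 2), (At s, 0, n - s - 1)} else {})"
| "dgen n (B0 s) =
     (if 1 \<le> s \<and> s \<le> n - 2
      then {(A (s+1), n*(n+1) div 2 - s, n*(n+1) div 2), (At s, n, 0)}
      else if n - 1 \<le> s \<and> s \<le> n
      then {(A s, n*(n+1) div 2, n*(n-1) div 2 - n + s + 1),
            (A (s+1), n*(n+1) div 2 - s, n*(n+1) div 2)}
      else if n + 1 \<le> s \<and> s \<le> 2*n - 2
      then {(A s, n*(n+1) div 2, n*(n-1) div 2 - n + s + 1), (At s, 0, n)}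
      else {})"
| "dgen n (B2 s) =
     (if n + 1 \<le> s \<and> s \<le> 2*n - 2
      then {(A (s+1), n*(n-1) div 2, n*(n-1) div 2), (At s, s - n, 0)} else {})"

definition dC :: "nat \<Rightarrow> elem \<Rightarrow> elem" where
  "dC n x = {(g', i', j'). odd (card {(g,i,j) \<in> x.
       \<exists>a b. (g', a, b) \<in> dgen n g \<and> i' = i + a \<and> j' = j + b})}"

text \<open>Admissible bigradings: an assignment of (gr_U, gr_V) to generators such that
  the differential is homogeneous of bigrading (-1,-1); U^i V^j g has bigrading
  gr g + (-2i,-2j).\<close>
definition grading_ok :: "nat \<Rightarrow> (gen \<Rightarrow> int \<times> int) \<Rightarrow> bool" where
  "grading_ok n gr = (\<forall>g. valid_gen n g \<longrightarrow> (\<forall>(g',a,b)\<in>dgen n g.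
       fst (gr g') - 2 * int a = fst (gr g) - 1 \<and>
       snd (gr g') - 2 * int b = snd (gr g) - 1))"

definition homog :: "(gen \<Rightarrow> int \<times> int) \<Rightarrow> int \<Rightarrow> int \<Rightarrow> elem \<Rightarrow> bool" where
  "homog gr a b x = (\<forall>(g,i,j)\<in>x. fst (gr g) - 2 * int i = a \<and> snd (gr g) - 2 * int j = b)"

definition R_linear_chain_map :: "nat \<Rightarrow> (elem \<Rightarrow> elem) \<Rightarrow> bool" where
  "R_linear_chain_map n phi =
     ((\<forall>x\<in>Cn n. phi x \<in> Cn n) \<and>
      (\<forall>x\<in>Cn n. \<forall>y\<in>Cn n. phi (add x y) = add (phi x) (phi y)) \<and>
      (\<forall>x\<in>Cn n. phi (mulU 1 x) = mulU 1 (phi x)) \<and>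
      (\<forall>x\<in>Cn n. phi (mulV 1 x) = mulV 1 (phi x)) \<and>
      (\<forall>x\<in>Cn n. phi (dC n x) = dC n (phi x)))"

definition homogeneous_map ::
  "nat \<Rightarrow> (gen \<Rightarrow> int \<times> int) \<Rightarrow> int \<Rightarrow> int \<Rightarrow> (elem \<Rightarrow> elem) \<Rightarrow> bool" where
  "homogeneous_map n gr c1 c2 phi =
     (\<forall>x\<in>Cn n. \<forall>a b. homog gr a b x \<longrightarrow> homog gr (a + c1) (b + c2) (phi x))"

text \<open>The complex C_n^* \<otimes>_R F[U]/(U^{n-1}) with V acting as 1: F-linear
  combinations of U^i g with i < n-1, encoded as finite sets of pairs (g,i).\<close>
type_synonym qelem = "(gen \<times> nat) set"

definition Qn :: "nat \<Rightarrow> qelem set" where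
  "Qn n = {y. finite y \<and> (\<forall>(g,i)\<in>y. valid_gen n g \<and> i < n - 1)}"

definition dQ :: "nat \<Rightarrow> qelem \<Rightarrow> qelem" where
  "dQ n y = {(g', i'). i' < n - 1 \<and> odd (card {(g,i) \<in> y.
       \<exists>a b. (g', a, b) \<in> dgen n g \<and> i' = i + a})}"

text \<open>The map x \<mapsto> x \<otimes> 1.\<close>
definition red :: "nat \<Rightarrow> elem \<Rightarrow> qelem" where
  "red n x = {(g, i). i < n - 1 \<and> odd (card {j. (g, i, j) \<in> x})}"

definition alpha :: "nat \<Rightarrow> elem" where
  "alpha s = {(A s, 0, 0)}"

end

theory Submission
  imports Defs
begin


lemma edge:
  assumes "grading_ok n gr" "valid_gen n g" "(g',a,b) \<in> dgen n g"
  shows "fst (gr g') = fst (gr g) - 1 + 2 * int a \<and> snd (gr g') = snd (gr g) - 1 + 2 * int b"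
proof -
  have "\<forall>(g',a,b)\<in>dgen n g. fst (gr g') - 2 * int a = fst (gr g) - 1 \<and>
       snd (gr g') - 2 * int b = snd (gr g) - 1"
    using assms(1,2) unfolding grading_ok_def by blast
  from bspec[OF this assms(3)] show ?thesis by simp
qed

lemma NM:
  fixes n :: nat assumes "n \<ge> 3"
  shows "n*(n+1) div 2 = n*(n-1) div 2 + n" "n*(n-1) div 2 \<ge> n"
proof -
  have e1: "n*(n+1) = n*(n-1) + n*2" using assms
    by (cases n) (simp_all add: algebra_simps)
  show "n*(n+1) div 2 = n*(n-1) div 2 + n" unfolding e1 by simp
  have "n*2 \<le> n*(n-1)" using assms by (intro mult_le_mono2) simp
  then show "n*(n-1) div 2 \<ge> n" by linarith
qed


context
  fixes n :: nat and gr :: "gen \<Rightarrow> int \<times> int"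
  assumes n3: "n \<ge> 3" and ok: "grading_ok n gr"
begin

definition "NN = n*(n-1) div 2"
definition "MM = n*(n+1) div 2"

lemma MN: "MM = NN + n" "NN \<ge> n"
  using NM[OF n3] unfolding MM_def NN_def by auto

lemma stepV:
  assumes "1 \<le> s" "s \<le> n - 2"
  shows "snd (gr (A s)) \<le> snd (gr (A (s+1)))"
    "snd (gr (At s)) \<le> snd (gr (A s))"
    "snd (gr (B1 s)) \<le> snd (gr (A s))"
    "snd (gr (B0 s)) \<le> snd (gr (A (s+1)))"
    "fst (gr (At s)) \<le> fst (gr (A s))"
proof -
  have v1: "valid_gen n (B1 s)" "valid_gen n (B0 s)" using assms by auto
  have "(A s, NN, NN) \<in> dgen n (B1 s)" "(At s, 0, n-s-1) \<in> dgen n (B1 s)"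
    using assms unfolding NN_def by auto
  note e1 = edge[OF ok v1(1) this(1)] edge[OF ok v1(1) this(2)]
  have "(A (s+1), MM - s, MM) \<in> dgen n (B0 s)" "(At s, n, 0) \<in> dgen n (B0 s)"
    using assms unfolding MM_def by auto
  note e2 = edge[OF ok v1(2) this(1)] edge[OF ok v1(2) this(2)]
  have i1: "int (n-s-1) = int n - int s - 1" "int (MM - s) = int MM - int s"
    using assms MN by auto
  show "snd (gr (A s)) \<le> snd (gr (A (s+1)))"
    "snd (gr (At s)) \<le> snd (gr (A s))"
    "snd (gr (B1 s)) \<le> snd (gr (A s))"
    "snd (gr (B0 s)) \<le> snd (gr (A (s+1)))"
    "fst (gr (At s)) \<le> fst (gr (A s))"
    using e1 e2 i1 MN assms by linarith+
qed

lemma stepU: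
  assumes "n + 1 \<le> s" "s \<le> 2*n - 2"
  shows "fst (gr (A (s+1))) \<le> fst (gr (A s))"
    "fst (gr (At s)) \<le> fst (gr (A s))"
    "fst (gr (B2 s)) \<le> fst (gr (A s))"
    "fst (gr (B0 s)) \<le> fst (gr (A s))"
proof -
  have v1: "valid_gen n (B2 s)" "valid_gen n (B0 s)" using assms by auto
  have "(A (s+1), NN, NN) \<in> dgen n (B2 s)" "(At s, s-n, 0) \<in> dgen n (B2 s)"
    using assms unfolding NN_def by auto
  note e1 = edge[OF ok v1(1) this(1)] edge[OF ok v1(1) this(2)]
  have "(A s, MM, NN - n + s + 1) \<in> dgen n (B0 s)" "(At s, 0, n) \<in> dgen n (B0 s)"
    using assms unfolding MM_def NN_def by auto
  note e2 = edge[OF ok v1(2) this(1)] edge[OF ok v1(2) this(2)]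
  have i1: "int (s-n) = int s - int n"
    using assms MN by auto
  show "fst (gr (A (s+1))) \<le> fst (gr (A s))"
    "fst (gr (At s)) \<le> fst (gr (A s))"
    "fst (gr (B2 s)) \<le> fst (gr (A s))"
    "fst (gr (B0 s)) \<le> fst (gr (A s))"
    using e1 e2 i1 MN assms by linarith+
qed

lemma mid:
  shows "snd (gr (A (n-1))) = snd (gr (A n)) - 2 * int n"
    "snd (gr (B0 (n-1))) \<le> snd (gr (A n)) - 2 * int n"
    "fst (gr (A (n+1))) = fst (gr (A n)) - 2 * int n"
    "fst (gr (B0 n)) \<le> fst (gr (A n)) - 2 * int n"
proof -
  have v1: "valid_gen n (B0 (n-1))" "valid_gen n (B0 n)" using n3 by auto
  have "(A (n-1), MM, NN) \<in> dgen n (B0 (n-1))" "(A n, MM - (n-1), MM) \<in> dgen n (B0 (n-1))"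
    using n3 MN unfolding MM_def NN_def by (auto simp: Suc_diff_Suc numeral_eq_Suc)
  note e1 = edge[OF ok v1(1) this(1)] edge[OF ok v1(1) this(2)]
  have "(A n, MM, NN + 1) \<in> dgen n (B0 n)" "(A (n+1), MM - n, MM) \<in> dgen n (B0 n)"
    using n3 MN unfolding MM_def NN_def by auto
  note e2 = edge[OF ok v1(2) this(1)] edge[OF ok v1(2) this(2)]
  have i1: "int (MM - (n-1)) = int MM - int n + 1" "int (MM - n) = int MM - int n"
    using n3 MN by auto
  show "snd (gr (A (n-1))) = snd (gr (A n)) - 2 * int n"
    "snd (gr (B0 (n-1))) \<le> snd (gr (A n)) - 2 * int n"
    "fst (gr (A (n+1))) = fst (gr (A n)) - 2 * int n"
    "fst (gr (B0 n)) \<le> fst (gr (A n)) - 2 * int n"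
    using e1 e2 i1 MN n3 by linarith+
qed

end


context
  fixes n :: nat and gr :: "gen \<Rightarrow> int \<times> int"
  assumes n3: "n \<ge> 3" and ok: "grading_ok n gr"
begin

lemma downV:
  assumes "1 \<le> s" "s \<le> n - 1"
  shows "snd (gr (A s)) \<le> snd (gr (A n)) - 2 * int n"
proof -
  have "1 \<le> s \<longrightarrow> snd (gr (A s)) \<le> snd (gr (A n)) - 2 * int n"
    using assms(2)
  proof (induction s rule: inc_induct)
    case base
    then show ?case using mid[OF n3 ok] by simp
  next
    case (step m)
    show ?case
    proof
      assume "1 \<le> m"
      have "snd (gr (A m)) \<le> snd (gr (A (m+1)))"
        using stepV(1)[OF n3 ok \<open>1 \<le> m\<close>] step.hyps by simp
      then show "snd (gr (A m)) \<le> snd (gr (A n)) - 2 * int n" using step.IH by simp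
    qed
  qed
  then show ?thesis using assms by simp
qed

lemma upU:
  assumes "n + 1 \<le> s" "s \<le> 2*n - 1"
  shows "fst (gr (A s)) \<le> fst (gr (A n)) - 2 * int n"
proof -
  have "s \<le> 2*n - 1 \<longrightarrow> fst (gr (A s)) \<le> fst (gr (A n)) - 2 * int n"
    using assms(1)
  proof (induction s rule: dec_induct)
    case base
    then show ?case using mid[OF n3 ok] by simp
  next
    case (step m)
    show ?case
    proof
      assume "Suc m \<le> 2*n - 1"
      have "fst (gr (A (m+1))) \<le> fst (gr (A m))"
        using stepU(1)[OF n3 ok \<open>n+1 \<le> m\<close>] \<open>Suc m \<le> 2*n - 1\<close> by simp
      then show "fst (gr (A (Suc m))) \<le> fst (gr (A n)) - 2 * int n" using step.IH \<open>Suc m \<le> 2*n - 1\<close> by simp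
    qed
  qed
  then show ?thesis using assms by simp
qed

lemma far:
  assumes "valid_gen n g" "g \<noteq> A n"
  shows "fst (gr g) \<le> fst (gr (A n)) - 2 * int n \<or> snd (gr g) \<le> snd (gr (A n)) - 2 * int n"
proof (cases g)
  case (A s)
  show ?thesis
  proof (cases "s < n")
    case True
    have "1 \<le> s" "s \<le> n - 1" using True assms A by auto
    then show ?thesis using downV[of s] A by blast
  next
    case False
    have "n + 1 \<le> s" "s \<le> 2*n - 1" using False assms A by auto
    then show ?thesis using upU[of s] A by blast
  qed
next
  case (At s)
  show ?thesis
  proof (cases "s \<le> n - 2")
    case True
    then have "1 \<le> s" "s \<le> n - 1" using assms At by auto
    then show ?thesis using True At downV[of s] stepV(2)[OF n3 ok, of s] by force
  next
    case False
    have "n + 1 \<le> s" "s \<le> 2*n - 2" "s \<le> 2*n - 1" using False assms At by auto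
    then show ?thesis using At upU[of s] stepU(2)[OF n3 ok, of s] by force
  qed
next
  case (B1 s)
  have "1 \<le> s" "s \<le> n - 2" "s \<le> n - 1" using assms B1 by auto
  then show ?thesis using B1 downV[of s] stepV(3)[OF n3 ok, of s] by force
next
  case (B0 s)
  show ?thesis
  proof (cases "s \<le> n - 2")
    case True
    have "1 \<le> s" "1 \<le> s + 1" "s + 1 \<le> n - 1" using True assms B0 n3 by auto
    then show ?thesis using True B0 downV[of "s+1"] stepV(4)[OF n3 ok, of s] by force
  next
    case F: False
    show ?thesis
    proof (cases "s = n - 1 \<or> s = n")
      case True
      then show ?thesis using mid[OF n3 ok] B0 by auto
    next
      case False
      have "n + 1 \<le> s" "s \<le> 2*n - 2" "s \<le> 2*n - 1" using F False assms B0 by auto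
      then show ?thesis using B0 upU[of s] stepU(4)[OF n3 ok, of s] by force
    qed
  qed
next
  case (B2 s)
  have "n + 1 \<le> s" "s \<le> 2*n - 2" "s \<le> 2*n - 1" using assms B2 by auto
  then show ?thesis using B2 upU[of s] stepU(3)[OF n3 ok, of s] by force
qed

end


lemma dA:
  fixes n :: nat
  assumes n3: "n \<ge> 3" and h: "(A n, a, b) \<in> dgen n g"
  shows "a \<ge> n - 1"
proof -
  note NM[OF n3]
  then show ?thesis using h n3
    by (cases g; ((auto split: if_splits); linarith))
qed

theorem lemma2p10:
  fixes n :: nat and gr :: "gen \<Rightarrow> int \<times> int" and phi :: "elem \<Rightarrow> elem"
    and c1 c2 :: int
  assumes "n \<ge> 3"
    and "grading_ok n gr"
    and "R_linear_chain_map n phi"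
    and "homogeneous_map n gr c1 c2 phi"
    and "c1 > - 2 * int n" and "c2 > - 2 * int n"
    and "\<exists>y\<in>Qn n. dQ n y = red n (phi (alpha n))"
  shows "\<exists>z\<in>Cn n. phi (alpha n) = mulU (n - 1) z"
proof -
  define P where "P = phi (alpha n)"
  have cm: "\<forall>x\<in>Cn n. phi x \<in> Cn n" using assms(3) unfolding R_linear_chain_map_def by blast
  have aC: "alpha n \<in> Cn n" using assms(1) unfolding Cn_def alpha_def by simp
  have PC: "P \<in> Cn n" using cm aC unfolding P_def by blast
  have hom: "homog gr (fst (gr (A n))) (snd (gr (A n))) (alpha n)"
    by (simp add: homog_def alpha_def)
  have hP: "homog gr (fst (gr (A n)) + c1) (snd (gr (A n)) + c2) P"
    using assms(4) aC hom unfolding homogeneous_map_def P_def by blast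
  have key: "g = A n \<and> 2 * int i = - c1 \<and> 2 * int j = - c2" if m: "(g,i,j) \<in> P" for g i j
  proof -
    have v: "valid_gen n g" using PC m unfolding Cn_def by blast
    have e: "fst (gr g) - 2 * int i = fst (gr (A n)) + c1" "snd (gr g) - 2 * int j = snd (gr (A n)) + c2"
      using hP m unfolding homog_def by fastforce+
    have "g = A n"
    proof (rule ccontr)
      assume "g \<noteq> A n"
      from far[OF assms(1,2) v this] e assms(5,6) show False by linarith
    qed
    then show ?thesis using e by simp
  qed
  show ?thesis
  proof (cases "P = {}")
    case True
    have "{} \<in> Cn n" unfolding Cn_def by simp
    moreover have "mulU (n - 1) {} = {}" unfolding mulU_def by simp
    ultimately show ?thesis using True unfolding P_def by metis
  next
    case False
    then obtain g i j where m: "(g,i,j) \<in> P" by auto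
    have k: "g = A n" "2 * int i = - c1" "2 * int j = - c2" using key[OF m] by auto
    have Peq: "P = {(A n, i, j)}"
    proof
      show "P \<subseteq> {(A n, i, j)}"
      proof
        fix x assume "x \<in> P"
        then obtain g' i' j' where x: "x = (g',i',j')" "(g',i',j') \<in> P" by (cases x) auto
        from key[OF x(2)] k show "x \<in> {(A n, i, j)}" using x(1) by simp
      qed
      show "{(A n, i, j)} \<subseteq> P" using m k by simp
    qed
    have il: "i < n" using k(2) assms(5) by linarith
    show ?thesis
    proof (cases "n - 1 \<le> i")
      case True
      let ?z = "{(A n, i - (n - 1), j)}"
      have "?z \<in> Cn n" using assms(1) unfolding Cn_def by simp
      moreover have "mulU (n - 1) ?z = P" unfolding mulU_def Peq using True by simp
      ultimately show ?thesis unfolding P_def by metis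
    next
      case False
      have r: "(A n, i) \<in> red n P"
      proof -
        have "{j'. (A n, i, j') \<in> P} = {j}" unfolding Peq by auto
        then show ?thesis unfolding red_def using False by simp
      qed
      obtain y where y: "y \<in> Qn n" "dQ n y = red n P" using assms(7) unfolding P_def by blast
      have "(A n, i) \<in> dQ n y" using r y by simp
      then have o: "odd (card {(g,i0) \<in> y. \<exists>a b. (A n, a, b) \<in> dgen n g \<and> i = i0 + a})"
        unfolding dQ_def by simp
      have E: "{(g,i0) \<in> y. \<exists>a b. (A n, a, b) \<in> dgen n g \<and> i = i0 + a} = {}"
      proof -
        have "\<not> (\<exists>a b. (A n, a, b) \<in> dgen n g \<and> i = i0 + a)" for g i0
        proof
          assume "\<exists>a b. (A n, a, b) \<in> dgen n g \<and> i = i0 + a"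
          then obtain a b where "(A n, a, b) \<in> dgen n g" "i = i0 + a" by blast
          with dA[OF assms(1)] False show False by fastforce
        qed
        then show ?thesis by blast
      qed
      from o show ?thesis unfolding E by simp
    qed
  qed
qed

end
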